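(* Let $\gamma$ be a gauge on $\mathbb{R}^d$, $D\subset\mathbb{R}^d$ finite, and let $C_\pi$ be an elementary convex set for $D$ determined by a family $\pi=(p_d)_{d\in D}$ of points of $B_{\gamma^\circ}$, such that $C_\pi\neq\{d\}$ for every $d\in D$. Then $C_\pi$ is bounded if and only if $\bigcap_{d\in D}\partial\gamma^\circ(p_d)=\emptyset$.
   Context: A gauge $\gamma$ on $\mathbb{R}^d$ is the Minkowski functional of a convex compact set $B_\gamma$ with the origin in its interior (not necessarily symmetric); $\gamma^\circ(p)=\max\{\langle p,x\rangle:\gamma(x)=1\}$ is the dual gauge with unit ball $B_{\gamma^\circ}$, and $\partial\gamma^\circ$ its subdifferential (for $\gamma^\circ(p)=1$, $\partial\gamma^\circ(p)=F(p)$ below). For $p\in B_{\gamma^\circ}$: if $\gamma^\circ(p)=1$, $N(p)$ is the cone $\mathbb{R}_{\ge0}F(p)$ generated by the exposed face $F(p)=\{x\in B_\gamma:\langle p,x\rangle=1\}$; if $\gamma^\circ(p)<1$, $N(p)=\{0\}$. For a finite set $S$ and $\pi=(p_s)_{s\in S}\subset B_{\gamma^\circ}$, $C_\pi=\bigcap_{s\in S}(s+N(p_s))$; a nonempty $C_\pi$ is an elementary convex set for $S$. *)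

theory Defs
  imports "HOL-Analysis.Analysis"
begin

text \<open>A gauge is given by its defining convex compact set B with 0 in its interior.\<close>
definition is_gauge_set :: "'a::euclidean_space set \<Rightarrow> bool" where
  "is_gauge_set B \<longleftrightarrow> convex B \<and> compact B \<and> 0 \<in> interior B"

definition gauge_fn :: "'a::euclidean_space set \<Rightarrow> 'a \<Rightarrow> real" where
  "gauge_fn B x = Inf {t. t > 0 \<and> x \<in> (\<lambda>y. t *\<^sub>R y) ` B}"

definition dual_gauge :: "'a::euclidean_space set \<Rightarrow> 'a \<Rightarrow> real" where
  "dual_gauge B p = Sup {p \<bullet> x | x. gauge_fn B x = 1}"

definition gauge_ball :: "'a::euclidean_space set \<Rightarrow> 'a set" where
  "gauge_ball B = {x. gauge_fn B x \<le> 1}"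

definition dual_ball :: "'a::euclidean_space set \<Rightarrow> 'a set" where
  "dual_ball B = {p. dual_gauge B p \<le> 1}"

definition subdiff :: "('a::euclidean_space \<Rightarrow> real) \<Rightarrow> 'a \<Rightarrow> 'a set" where
  "subdiff f p = {x. \<forall>q. f q \<ge> f p + x \<bullet> (q - p)}"

definition exposed_face :: "'a::euclidean_space set \<Rightarrow> 'a \<Rightarrow> 'a set" where
  "exposed_face B p = {x \<in> gauge_ball B. p \<bullet> x = 1}"

definition normal_cone :: "'a::euclidean_space set \<Rightarrow> 'a \<Rightarrow> 'a set" where
  "normal_cone B p = (if dual_gauge B p = 1
     then {c *\<^sub>R x | c x. c \<ge> 0 \<and> x \<in> exposed_face B p} else {0})"

definition elem_set :: "'a::euclidean_space set \<Rightarrow> 'a set \<Rightarrow> ('a \<Rightarrow> 'a) \<Rightarrow> 'a set" where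
  "elem_set B S p = (\<Inter>s\<in>S. (\<lambda>v. s + v) ` normal_cone B (p s))"

end

theory Submission
  imports Defs
begin

lemma gauge_consts:
  assumes "is_gauge_set B"
  obtains r R where "r>0" "R>0" "cball 0 r \<subseteq> B" "\<forall>b\<in>B. norm b \<le> R"
proof -
  from assms have "0 \<in> interior B" "compact B" by (auto simp: is_gauge_set_def)
  then obtain r where r: "r>0" "cball 0 r \<subseteq> B"
    by (meson mem_interior_cball)
  from \<open>compact B\<close> obtain R where "R>0" "\<forall>b\<in>B. norm b \<le> R"
    using compact_imp_bounded bounded_pos by blast
  with r that show ?thesis by blast
qed

lemma T_ne:
  assumes "is_gauge_set B"
  shows "{t. t>0 \<and> x \<in> (\<lambda>y. t *\<^sub>R y) ` B} \<noteq> {}"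
proof -
  obtain r R where r: "r>0" "R>0" "cball 0 r \<subseteq> B" "\<forall>b\<in>B. norm b \<le> R"
    using gauge_consts[OF assms] by blast
  define t where "t = (norm x + 1) / r"
  have t: "t > 0" using r unfolding t_def by (smt (verit) divide_pos_pos norm_ge_zero)
  have "norm (x /\<^sub>R t) \<le> r" using r t by (simp add: t_def field_simps)
  then have "x /\<^sub>R t \<in> B" using r by auto
  moreover have "x = t *\<^sub>R (x /\<^sub>R t)" using t by simp
  ultimately show ?thesis using t by blast
qed

lemma gauge_lower:
  assumes "is_gauge_set B" "R>0" "\<forall>b\<in>B. norm b \<le> R"
  shows "norm x / R \<le> gauge_fn B x"
  unfolding gauge_fn_def
proof (rule cInf_greatest)
  show "{t. t>0 \<and> x \<in> (\<lambda>y. t *\<^sub>R y) ` B} \<noteq> {}" by (rule T_ne[OF assms(1)])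
next
  fix t assume "t \<in> {t. t>0 \<and> x \<in> (\<lambda>y. t *\<^sub>R y) ` B}"
  then obtain b where b: "t>0" "b \<in> B" "x = t *\<^sub>R b" by auto
  have "norm x = t * norm b" using b by simp
  also have "\<dots> \<le> t * R" using b assms by (simp add: mult_left_mono)
  finally show "norm x / R \<le> t" using assms by (simp add: field_simps)
qed

lemma gauge_nonneg:
  assumes "is_gauge_set B"
  shows "0 \<le> gauge_fn B x"
proof -
  obtain r R where r: "r>0" "R>0" "cball 0 r \<subseteq> B" "\<forall>b\<in>B. norm b \<le> R"
    using gauge_consts[OF assms] by blast
  have "0 \<le> norm x / R" using r by simp
  also have "\<dots> \<le> gauge_fn B x" using gauge_lower[OF assms r(2,4)] .
  finally show ?thesis .
qed

lemma gauge_pos: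
  assumes "is_gauge_set B" "x \<noteq> 0"
  shows "0 < gauge_fn B x"
proof -
  obtain r R where r: "r>0" "R>0" "cball 0 r \<subseteq> B" "\<forall>b\<in>B. norm b \<le> R"
    using gauge_consts[OF assms(1)] by blast
  have "0 < norm x / R" using r assms by simp
  also have "\<dots> \<le> gauge_fn B x" using gauge_lower[OF assms(1) r(2,4)] .
  finally show ?thesis .
qed

lemma gauge_le1_if_mem:
  assumes "is_gauge_set B" "x \<in> B"
  shows "gauge_fn B x \<le> 1"
  unfolding gauge_fn_def
  by (rule cInf_lower) (use assms in \<open>auto intro!: bdd_belowI[where m=0]\<close>)

lemma gauge_scale:
  assumes "is_gauge_set B" "s > 0"
  shows "gauge_fn B (s *\<^sub>R x) = s * gauge_fn B x"
proof -
  define Tx where "Tx = {t. t>0 \<and> x \<in> (\<lambda>y. t *\<^sub>R y) ` B}"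
  define Ts where "Ts = {t. t>0 \<and> s *\<^sub>R x \<in> (\<lambda>y. t *\<^sub>R y) ` B}"
  have ne: "Tx \<noteq> {}" "Ts \<noteq> {}" using T_ne[OF assms(1)] unfolding Tx_def Ts_def by blast+
  have bb: "bdd_below Tx" "bdd_below Ts" unfolding Tx_def Ts_def by (auto intro!: bdd_belowI[where m=0])
  have m1: "s * t \<in> Ts" if "t \<in> Tx" for t
  proof -
    from that obtain b where "t>0" "b\<in>B" "x = t *\<^sub>R b" by (auto simp: Tx_def)
    then show ?thesis using assms by (auto simp: Ts_def image_iff intro!: bexI[of _ b])
  qed
  have m2: "u / s \<in> Tx" if "u \<in> Ts" for u
  proof -
    from that obtain b where b: "u>0" "b\<in>B" "s *\<^sub>R x = u *\<^sub>R b" by (auto simp: Ts_def)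
    then have "x = (u/s) *\<^sub>R b" using assms
      by (metis (no_types, lifting) divide_inverse_commute less_irrefl scaleR_scaleR vector_fraction_eq_iff)
    then show ?thesis using b assms by (auto simp: Tx_def image_iff)
  qed
  have "Inf Ts / s \<le> Inf Tx"
  proof (rule cInf_greatest[OF ne(1)])
    fix t assume "t \<in> Tx"
    then have "Inf Ts \<le> s * t" using m1 bb by (simp add: cInf_lower)
    then show "Inf Ts / s \<le> t" using assms by (simp add: field_simps)
  qed
  moreover have "s * Inf Tx \<le> Inf Ts"
  proof (rule cInf_greatest[OF ne(2)])
    fix u assume "u \<in> Ts"
    then have "Inf Tx \<le> u / s" using m2 bb by (simp add: cInf_lower)
    then show "s * Inf Tx \<le> u" using assms by (simp add: field_simps)
  qed
  ultimately show ?thesis using assms unfolding gauge_fn_def Tx_def[symmetric] Ts_def[symmetric]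
    by (simp add: field_simps)
qed


lemma gauge_unit:
  assumes "is_gauge_set B" "v \<noteq> 0"
  shows "gauge_fn B (v /\<^sub>R gauge_fn B v) = 1"
  using gauge_scale[OF assms(1), of "inverse (gauge_fn B v)" v] gauge_pos[OF assms]
  by simp

lemma unit_ex:
  assumes "is_gauge_set B"
  shows "\<exists>y::'a::euclidean_space. gauge_fn B y = 1"
proof -
  have "(SOME i. i \<in> Basis) \<noteq> (0::'a)" using SOME_Basis nonzero_Basis by blast
  then show ?thesis using gauge_unit[OF assms] by blast
qed

lemma unit_norm:
  assumes "is_gauge_set B" "R>0" "\<forall>b\<in>B. norm b \<le> R" "gauge_fn B y = 1"
  shows "norm y \<le> R"
  using gauge_lower[OF assms(1-3), of y] assms by (simp add: field_simps)

lemma S_ne: assumes "is_gauge_set B" shows "{q \<bullet> x | x. gauge_fn B x = 1} \<noteq> {}"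
  using unit_ex[OF assms] by blast

lemma S_bdd: assumes "is_gauge_set B" shows "bdd_above {q \<bullet> x | x. gauge_fn B x = 1}"
proof -
  obtain r R where r: "r>0" "R>0" "cball 0 r \<subseteq> B" "\<forall>b\<in>B. norm b \<le> R"
    using gauge_consts[OF assms] by blast
  show ?thesis
  proof (rule bdd_aboveI[where M="norm q * R"], clarify)
    fix x assume "gauge_fn B x = 1"
    then have "norm x \<le> R" using unit_norm[OF assms r(2,4)] by blast
    then show "q \<bullet> x \<le> norm q * R"
      by (smt (verit) Cauchy_Schwarz_ineq2 mult_left_mono norm_ge_zero)
  qed
qed

lemma dual_upper1:
  assumes "is_gauge_set B" "gauge_fn B y = 1"
  shows "q \<bullet> y \<le> dual_gauge B q"
  unfolding dual_gauge_def by (rule cSup_upper) (use assms S_bdd in auto)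

lemma dual_upper:
  assumes "is_gauge_set B" "y \<noteq> 0"
  shows "q \<bullet> y \<le> dual_gauge B q * gauge_fn B y"
proof -
  have g: "gauge_fn B y > 0" using gauge_pos[OF assms] .
  have "q \<bullet> (y /\<^sub>R gauge_fn B y) \<le> dual_gauge B q"
    using dual_upper1[OF assms(1) gauge_unit[OF assms]] .
  then show ?thesis using g by (simp add: field_simps)
qed

lemma dual_le:
  assumes "is_gauge_set B" "\<And>y. gauge_fn B y = 1 \<Longrightarrow> q \<bullet> y \<le> M"
  shows "dual_gauge B q \<le> M"
  unfolding dual_gauge_def by (rule cSup_least) (use assms S_ne[OF assms(1), of q] in auto)

lemma dual_nonneg:
  assumes "is_gauge_set B"
  shows "0 \<le> dual_gauge B q"
proof (cases "q = 0")
  case True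
  obtain y where "gauge_fn B y = 1" using unit_ex[OF assms] by blast
  then show ?thesis using dual_upper1[OF assms, of y q] True by simp
next
  case False
  have "q \<bullet> q \<le> dual_gauge B q * gauge_fn B q" using dual_upper[OF assms False] .
  moreover have "q \<bullet> q > 0" using False by simp
  moreover have "gauge_fn B q > 0" using gauge_pos[OF assms False] .
  ultimately show ?thesis by (meson less_le_trans not_le mult_nonpos_nonneg less_imp_le)
qed

lemma dual_zero: assumes "is_gauge_set B" shows "dual_gauge B 0 = 0"
  using dual_nonneg[OF assms, of 0] dual_le[OF assms, of 0 0] by simp

lemma L7:
  assumes "is_gauge_set B" "\<forall>q. q \<bullet> x \<le> dual_gauge B q"
  shows "gauge_fn B x \<le> 1"
proof (rule ccontr)
  assume "\<not> gauge_fn B x \<le> 1"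
  then have "x \<notin> B" using gauge_le1_if_mem[OF assms(1)] by force
  moreover have "convex B" "closed B" using assms(1) by (auto simp: is_gauge_set_def compact_imp_closed)
  ultimately obtain a b where ab: "a \<bullet> x < b" "\<forall>z\<in>B. b < a \<bullet> z"
    using separating_hyperplane_closed_point by blast
  define q where "q = - a"
  define \<beta> where "\<beta> = - b"
  have qB: "\<forall>z\<in>B. q \<bullet> z < \<beta>" using ab by (auto simp: q_def \<beta>_def)
  have qx: "\<beta> < q \<bullet> x" using ab by (auto simp: q_def \<beta>_def)
  have "0 \<in> B" using assms(1) interior_subset by (auto simp: is_gauge_set_def)
  then have \<beta>pos: "\<beta> > 0" using qB by fastforce
  have "q \<bullet> y \<le> \<beta>" if y: "gauge_fn B y = 1" for y
  proof (rule ccontr)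
    assume "\<not> q \<bullet> y \<le> \<beta>"
    then have c: "1 < (q \<bullet> y) / \<beta>" using \<beta>pos by (simp add: field_simps)
    have "Inf {t. t>0 \<and> y \<in> (\<lambda>y. t *\<^sub>R y) ` B} < (q \<bullet> y) / \<beta>"
      using y c by (simp add: gauge_fn_def)
    then obtain t where t: "t \<in> {t. t>0 \<and> y \<in> (\<lambda>y. t *\<^sub>R y) ` B}" "t < (q \<bullet> y) / \<beta>"
      using cInf_lessD[OF T_ne[OF assms(1)]] by blast
    then obtain z where z: "t > 0" "z \<in> B" "y = t *\<^sub>R z" by auto
    have e1: "q \<bullet> y = t * (q \<bullet> z)" using z by simp
    have e2: "t * (q \<bullet> z) < t * \<beta>" using z qB by simp
    have e3: "t * \<beta> < q \<bullet> y" using t(2) \<beta>pos by (simp add: field_simps)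
    show False using e1 e2 e3 by linarith
  qed
  then have "dual_gauge B q \<le> \<beta>" using dual_le[OF assms(1)] by blast
  moreover have "q \<bullet> x \<le> dual_gauge B q" using assms(2) by blast
  ultimately show False using qx by linarith
qed

definition KK :: "'a::euclidean_space set \<Rightarrow> 'a set" where
  "KK B = {x. \<forall>q. q \<bullet> x \<le> dual_gauge B q}"

definition FF :: "'a::euclidean_space set \<Rightarrow> 'a \<Rightarrow> 'a set" where
  "FF B p = {x. p \<bullet> x = 1} \<inter> KK B"

lemma exposed_eq:
  assumes "is_gauge_set B"
  shows "exposed_face B p = FF B p"
proof (rule set_eqI, rule iffI)
  fix x assume "x \<in> exposed_face B p"
  then have x: "gauge_fn B x \<le> 1" "p \<bullet> x = 1" by (auto simp: exposed_face_def gauge_ball_def)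
  then have "x \<noteq> 0" by auto
  have "q \<bullet> x \<le> dual_gauge B q" for q
  proof -
    have "q \<bullet> x \<le> dual_gauge B q * gauge_fn B x" using dual_upper[OF assms \<open>x\<noteq>0\<close>] .
    also have "\<dots> \<le> dual_gauge B q" using x dual_nonneg[OF assms, of q]
      by (simp add: mult_left_le)
    finally show ?thesis .
  qed
  then show "x \<in> FF B p" using x by (auto simp: FF_def KK_def)
next
  fix x assume "x \<in> FF B p"
  then show "x \<in> exposed_face B p" using L7[OF assms, of x]
    by (auto simp: FF_def KK_def exposed_face_def gauge_ball_def)
qed

lemma subdiff_eq:
  assumes "is_gauge_set B" "dual_gauge B p = 1"
  shows "subdiff (dual_gauge B) p = FF B p"
proof (rule set_eqI, rule iffI)
  fix x assume "x \<in> subdiff (dual_gauge B) p"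
  then have h: "\<And>q. dual_gauge B q \<ge> 1 + x \<bullet> (q - p)" using assms(2) by (auto simp: subdiff_def)
  have "0 \<ge> 1 + x \<bullet> (0 - p)" using h[of 0] dual_zero[OF assms(1)] by simp
  then have a: "x \<bullet> p \<ge> 1" by (simp add: inner_diff_right)
  have "dual_gauge B (2 *\<^sub>R p) \<le> 2"
  proof (rule dual_le[OF assms(1)])
    fix y assume "gauge_fn B y = 1"
    then have "p \<bullet> y \<le> 1" using dual_upper1[OF assms(1)] assms(2) by metis
    then show "(2 *\<^sub>R p) \<bullet> y \<le> 2" by simp
  qed
  then have "x \<bullet> p \<le> 1" using h[of "2 *\<^sub>R p"] by (simp add: inner_diff_right algebra_simps)
  with a have xp: "x \<bullet> p = 1" by simp
  have "q \<bullet> x \<le> dual_gauge B q" for q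
    using h[of q] xp by (simp add: inner_diff_right inner_commute)
  then show "x \<in> FF B p" using xp by (auto simp: FF_def KK_def inner_commute)
next
  fix x assume "x \<in> FF B p"
  then have "p \<bullet> x = 1" "\<And>q. q \<bullet> x \<le> dual_gauge B q" by (auto simp: FF_def KK_def)
  then show "x \<in> subdiff (dual_gauge B) p" using assms(2)
    by (auto simp: subdiff_def inner_diff_right inner_commute)
qed


lemma KK_compact_convex:
  assumes "is_gauge_set B"
  shows "compact (KK B)" "convex (KK B)"
proof -
  have eq: "KK B = (\<Inter>q. {x. q \<bullet> x \<le> dual_gauge B q})" by (auto simp: KK_def)
  obtain r R where r: "r>0" "R>0" "cball 0 r \<subseteq> B" "\<forall>b\<in>B. norm b \<le> R"
    using gauge_consts[OF assms] by blast
  have "KK B \<subseteq> cball 0 R"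
  proof
    fix x assume "x \<in> KK B"
    then have "gauge_fn B x \<le> 1" using L7[OF assms] by (auto simp: KK_def)
    moreover have "norm x / R \<le> gauge_fn B x" using gauge_lower[OF assms r(2,4)] .
    ultimately have "norm x \<le> R * gauge_fn B x" using r by (simp add: field_simps)
    also have "\<dots> \<le> R" using \<open>gauge_fn B x \<le> 1\<close> r by (simp add: mult_left_le)
    finally show "x \<in> cball 0 R" by simp
  qed
  then have "bounded (KK B)" by (meson bounded_cball bounded_subset)
  moreover have "closed (KK B)" unfolding eq by (intro closed_INT) (simp add: closed_halfspace_le)
  ultimately show "compact (KK B)" by (simp add: compact_eq_bounded_closed)
  show "convex (KK B)" unfolding eq by (intro convex_INT) (simp add: convex_halfspace_le)
qed

lemma FF_props:
  assumes "is_gauge_set B"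
  shows "compact (FF B p)" "convex (FF B p)" "0 \<notin> FF B p"
proof -
  show "compact (FF B p)" unfolding FF_def
    using KK_compact_convex[OF assms] closed_hyperplane
    by (metis closed_Int_compact)
  show "convex (FF B p)" unfolding FF_def
    using KK_compact_convex[OF assms] convex_hyperplane by (metis convex_Int)
  show "0 \<notin> FF B p" by (simp add: FF_def)
qed

lemma conic_convex_add:
  assumes "conic S" "convex S" "a \<in> S" "b \<in> S"
  shows "a + b \<in> S"
proof -
  have "(1/2) *\<^sub>R a + (1/2) *\<^sub>R b \<in> S" using assms(2-4) by (simp add: convexD)
  then have "2 *\<^sub>R ((1/2) *\<^sub>R a + (1/2) *\<^sub>R b) \<in> S" using assms(1) conic_mul by fastforce
  then show ?thesis by (simp add: scaleR_add_right)
qed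

theorem mainTheorem10:
  fixes B :: "'a::euclidean_space set" and D :: "'a set" and p :: "'a \<Rightarrow> 'a"
  assumes "is_gauge_set B"
    and "finite D"
    and "\<forall>d\<in>D. p d \<in> dual_ball B"
    and "elem_set B D p \<noteq> {}"
    and "\<forall>d\<in>D. elem_set B D p \<noteq> {d}"
  shows "bounded (elem_set B D p) \<longleftrightarrow> (\<Inter>d\<in>D. subdiff (dual_gauge B) (p d)) = {}"
proof (cases "D = {}")
  case True
  then show ?thesis by (simp add: elem_set_def)
next
  case Dne: False
  note G = assms(1)
  define C where "C = elem_set B D p"
  have one: "dual_gauge B (p d) = 1" if "d \<in> D" for d
  proof (rule ccontr)
    assume "dual_gauge B (p d) \<noteq> 1"
    then have "normal_cone B (p d) = {0}" by (simp add: normal_cone_def)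
    then have "C \<subseteq> {d}" using that by (auto simp: C_def elem_set_def)
    then show False using assms(4,5) that unfolding C_def by blast
  qed
  have nc: "normal_cone B (p d) = conic hull FF B (p d)" if "d \<in> D" for d
    using one[OF that] exposed_eq[OF G] by (simp add: normal_cone_def conic_hull_explicit)
  have Ceq: "C = (\<Inter>d\<in>D. (\<lambda>v. d + v) ` (conic hull FF B (p d)))"
    using nc by (simp add: C_def elem_set_def)
  have sd: "subdiff (dual_gauge B) (p d) = FF B (p d)" if "d \<in> D" for d
    using subdiff_eq[OF G one[OF that]] .
  have cc: "conic (conic hull FF B (p d))" "convex (conic hull FF B (p d))"
    "closed (conic hull FF B (p d))" for d
    using conic_conic_hull convex_conic_hull[OF FF_props(2)[OF G]]
      closed_conic_hull[of "FF B (p d)"] FF_props[OF G] by auto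
  show ?thesis
  proof
    assume bC: "bounded (elem_set B D p)"
    show "(\<Inter>d\<in>D. subdiff (dual_gauge B) (p d)) = {}"
    proof (rule ccontr)
      assume "(\<Inter>d\<in>D. subdiff (dual_gauge B) (p d)) \<noteq> {}"
      then obtain x where x: "\<And>d. d \<in> D \<Longrightarrow> x \<in> FF B (p d)" using sd by blast
      obtain d0 where d0: "d0 \<in> D" using Dne by blast
      have "x \<noteq> 0" using x[OF d0] FF_props(3)[OF G] by metis
      obtain c where c: "c \<in> C" using assms(4) C_def by blast
      have inC: "c + t *\<^sub>R x \<in> C" if t: "t \<ge> 0" for t
      proof -
        have "c + t *\<^sub>R x \<in> (\<lambda>v. d + v) ` (conic hull FF B (p d))" if d: "d \<in> D" for d
        proof -
          have "c - d \<in> conic hull FF B (p d)" using c d unfolding Ceq by force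
          moreover have "t *\<^sub>R x \<in> conic hull FF B (p d)"
            using x[OF d] t by (auto simp: conic_hull_explicit)
          ultimately have "(c - d) + t *\<^sub>R x \<in> conic hull FF B (p d)"
            using conic_convex_add cc by blast
          then show ?thesis by (force intro: image_eqI[where x="(c - d) + t *\<^sub>R x"])
        qed
        then show ?thesis unfolding Ceq by blast
      qed
      from bC obtain M where M: "\<forall>z\<in>C. norm z \<le> M" unfolding C_def bounded_iff by blast
      define t where "t = (\<bar>M\<bar> + norm c + 1) / norm x"
      have tpos: "t \<ge> 0" using \<open>x \<noteq> 0\<close> by (simp add: t_def)
      have "norm (t *\<^sub>R x) = \<bar>M\<bar> + norm c + 1" using \<open>x \<noteq> 0\<close> tpos by (simp add: t_def)
      moreover have "norm (t *\<^sub>R x) \<le> norm (c + t *\<^sub>R x) + norm c"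
        by (metis add.commute add_diff_cancel_left' norm_triangle_ineq4)
      moreover have "norm (c + t *\<^sub>R x) \<le> M" using M inC[OF tpos] by blast
      ultimately show False by linarith
    qed
  next
    assume emp: "(\<Inter>d\<in>D. subdiff (dual_gauge B) (p d)) = {}"
    show "bounded (elem_set B D p)"
    proof (rule ccontr)
      assume "\<not> bounded (elem_set B D p)"
      then have "\<forall>n::nat. \<exists>y\<in>C. norm y > real (Suc n)"
        unfolding C_def bounded_iff by (meson not_le)
      then obtain y where y: "\<And>n. y n \<in> C" "\<And>n. norm (y n) > real (Suc n)" by metis
      have ynz: "norm (y n) > 0" for n using y(2)[of n] by linarith
      define u where "u n = y n /\<^sub>R norm (y n)" for n
      have "u n \<in> sphere 0 1" for n using ynz[of n] by (simp add: u_def)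
      then obtain l r where lr: "l \<in> sphere 0 1" "strict_mono (r::nat\<Rightarrow>nat)" "(u \<circ> r) \<longlonglongrightarrow> l"
        using seq_compactE[OF compact_imp_seq_compact[OF compact_sphere]] by metis
      have lnz: "l \<noteq> 0" using lr(1) by auto
      have lcone: "l \<in> conic hull FF B (p d)" if d: "d \<in> D" for d
      proof -
        define w where "w n = (y (r n) - d) /\<^sub>R norm (y (r n))" for n
        have "y (r n) - d \<in> conic hull FF B (p d)" for n using y(1)[of "r n"] d unfolding Ceq by force
        then have wi: "w n \<in> conic hull FF B (p d)" for n
          unfolding w_def using cc(1) conic_mul by (metis inverse_nonnegative_iff_nonnegative norm_ge_zero)
        have z: "(\<lambda>n. inverse (norm (y (r n))) *\<^sub>R d) \<longlonglongrightarrow> 0"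
        proof (rule Lim_null_comparison)
          show "\<forall>\<^sub>F n in sequentially. norm (inverse (norm (y (r n))) *\<^sub>R d) \<le> norm d * inverse (real (Suc n))"
          proof (rule always_eventually, rule allI)
            fix n
            have "real (Suc n) \<le> real (Suc (r n))" using seq_suble[OF lr(2), of n] by simp
            then have "real (Suc n) \<le> norm (y (r n))" using y(2)[of "r n"] by linarith
            then have "inverse (norm (y (r n))) \<le> inverse (real (Suc n))"
              by (simp add: le_imp_inverse_le)
            then show "norm (inverse (norm (y (r n))) *\<^sub>R d) \<le> norm d * inverse (real (Suc n))"
              by (simp add: mult.commute mult_left_mono)
          qed
          show "(\<lambda>n. norm d * inverse (real (Suc n))) \<longlonglongrightarrow> 0"
            using tendsto_mult_right_zero[OF LIMSEQ_inverse_real_of_nat] by simp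
        qed
        have "(\<lambda>n. u (r n) - inverse (norm (y (r n))) *\<^sub>R d) \<longlonglongrightarrow> l - 0"
          using tendsto_diff[OF lr(3)[unfolded comp_def] z] .
        moreover have "w n = u (r n) - inverse (norm (y (r n))) *\<^sub>R d" for n
          by (simp add: w_def u_def scaleR_diff_right)
        ultimately have "w \<longlonglongrightarrow> l" by (metis (no_types, lifting) diff_zero ext)
        then show ?thesis using closed_sequentially[of "conic hull FF B (p d)" w l] cc(3) wi by blast
      qed
      define x where "x = l /\<^sub>R gauge_fn B l"
      have xF: "x \<in> FF B (p d)" if d: "d \<in> D" for d
      proof -
        obtain c z where cz: "l = c *\<^sub>R z" "c \<ge> 0" "z \<in> FF B (p d)"
          using lcone[OF d] by (auto simp: conic_hull_explicit)
        have cpos: "c > 0" using cz lnz by (metis less_eq_real_def scale_zero_left)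
        have znz: "z \<noteq> 0" using cz(3) FF_props(3)[OF G] by metis
        have "gauge_fn B z \<le> 1" using cz(3) L7[OF G] by (auto simp: FF_def KK_def)
        moreover have "p d \<bullet> z \<le> dual_gauge B (p d) * gauge_fn B z" using dual_upper[OF G znz] .
        moreover have "p d \<bullet> z = 1" using cz(3) by (simp add: FF_def)
        ultimately have gz: "gauge_fn B z = 1" using one[OF d] by simp
        have "gauge_fn B l = c" using gauge_scale[OF G cpos, of z] gz cz(1) by simp
        then have "x = z" using cpos cz(1) by (simp add: x_def)
        then show ?thesis using cz(3) by simp
      qed
      have "x \<in> (\<Inter>d\<in>D. subdiff (dual_gauge B) (p d))" using xF sd by blast
      then show False using emp by blast
    qed
  qed
qed

end
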